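(* Let $1\le k\le n$ be integers, $\boldsymbol c\in\mathbb{R}^n$, and $\boldsymbol E\in\mathbb{R}^{n\times d}$ with unit-norm rows $\boldsymbol e_1,\dots,\boldsymbol e_n$ satisfying $\boldsymbol e_i^{\mathsf T}\boldsymbol e_j>-1$ for all $i\ne j$. Let $\lambda\ge 2$, $\theta\in[0,1)$, and $$f(\boldsymbol x)=\theta\,(k-1)\,\boldsymbol c^{\mathsf T}\boldsymbol x+(1-\theta)\,\boldsymbol x^{\mathsf T}(\lambda \boldsymbol I-\boldsymbol E\boldsymbol E^{\mathsf T})\boldsymbol x ,$$ considered on the feasible set $P=\{\boldsymbol x\in[0,1]^n:\boldsymbol 1^{\mathsf T}\boldsymbol x=k\}$. Then every stationary point $\boldsymbol x\in P$ of $\max_{P} f$ is either a local maximizer of $f$ on $P$, or a strict saddle in the following sense: there exist distinct indices $i,j$ and $\delta>0$ such that $\boldsymbol x+\delta(\boldsymbol e^{(i)}-\boldsymbol e^{(j)})\in P$, $\partial_i f(\boldsymbol x)=\partial_j f(\boldsymbol x)$, and the curvature $(\boldsymbol e^{(i)}-\boldsymbol e^{(j)})^{\mathsf T}\nabla^2 f\,(\boldsymbol e^{(i)}-\boldsymbol e^{(j)})=4(1-\theta)(\lambda-1+\boldsymbol e_i^{\mathsf T}\boldsymbol e_j)$ is strictly positive, so that $f(\boldsymbol x+\delta(\boldsymbol e^{(i)}-\boldsymbol e^{(j)}))>f(\boldsymbol x)$. Furthermore, every local maximizer of $f$ on $P$ is integral, i.e. lies in $\{0,1\}^n$.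
   Context: Here $\boldsymbol e^{(i)}$ denotes the $i$-th standard basis vector of $\mathbb{R}^n$ (distinct from the row $\boldsymbol e_i$ of $\boldsymbol E$). A stationary point is a KKT point of $\max_P f$: there is $\mu\in\mathbb{R}$ with $\partial_i f(\boldsymbol x)\le\mu$ whenever $x_i=0$, $\partial_i f(\boldsymbol x)\ge\mu$ whenever $x_i=1$, and $\partial_i f(\boldsymbol x)=\mu$ whenever $0<x_i<1$. A local maximizer is a point $\boldsymbol x^\ast\in P$ with $f(\boldsymbol x)\le f(\boldsymbol x^\ast)$ for all $\boldsymbol x\in P$ in some neighborhood of $\boldsymbol x^\ast$. *)

theory Defs
  imports "HOL-Analysis.Analysis"
begin

definition feasible :: "nat \<Rightarrow> (real ^ 'n) set" where
  "feasible k = {x. (\<forall>i. 0 \<le> x $ i \<and> x $ i \<le> 1) \<and> (\<Sum>i\<in>UNIV. x $ i) = real k}"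

text \<open>Objective f(x) = theta (k-1) c^T x + (1-theta) x^T (lam I - E E^T) x, where the rows
  of E are e i, so (E E^T)_{ij} = e i \<bullet> e j.\<close>
definition obj :: "nat \<Rightarrow> real \<Rightarrow> real \<Rightarrow> real ^ 'n \<Rightarrow> ('n \<Rightarrow> real ^ 'd) \<Rightarrow> real ^ 'n \<Rightarrow> real" where
  "obj k lam \<theta> c e x =
     \<theta> * (real k - 1) * (c \<bullet> x)
     + (1 - \<theta>) * (\<Sum>i\<in>UNIV. \<Sum>j\<in>UNIV.
          x $ i * ((if i = j then lam else 0) - e i \<bullet> e j) * x $ j)"

definition partial :: "(real ^ 'n \<Rightarrow> real) \<Rightarrow> real ^ 'n \<Rightarrow> 'n \<Rightarrow> real" where
  "partial f x i = frechet_derivative f (at x) (axis i 1)"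

definition stationary :: "(real ^ 'n \<Rightarrow> real) \<Rightarrow> (real ^ 'n) set \<Rightarrow> real ^ 'n \<Rightarrow> bool" where
  "stationary f P x \<longleftrightarrow> x \<in> P \<and> f differentiable (at x) \<and>
     (\<exists>\<mu>::real. \<forall>i. (x $ i = 0 \<longrightarrow> partial f x i \<le> \<mu>)
                   \<and> (x $ i = 1 \<longrightarrow> partial f x i \<ge> \<mu>)
                   \<and> (0 < x $ i \<and> x $ i < 1 \<longrightarrow> partial f x i = \<mu>))"

definition local_maximizer :: "(real ^ 'n \<Rightarrow> real) \<Rightarrow> (real ^ 'n) set \<Rightarrow> real ^ 'n \<Rightarrow> bool" where
  "local_maximizer f P x \<longleftrightarrow> x \<in> P \<and>
     (\<exists>\<epsilon>>0. \<forall>y\<in>P. dist y x < \<epsilon> \<longrightarrow> f y \<le> f x)"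

text \<open>Curvature v^T (Hessian of f at x) v, as the second derivative of t \<mapsto> f(x + t v) at 0.\<close>
definition curvature :: "(real ^ 'n \<Rightarrow> real) \<Rightarrow> real ^ 'n \<Rightarrow> real ^ 'n \<Rightarrow> real" where
  "curvature f x v = deriv (deriv (\<lambda>t. f (x + t *\<^sub>R v))) 0"

end

theory Submission
  imports Defs
begin

definition Mm :: "real \<Rightarrow> ('n \<Rightarrow> real ^ 'd) \<Rightarrow> 'n \<Rightarrow> 'n \<Rightarrow> real" where
  "Mm lam e a b = (if a = b then lam else 0) - e a \<bullet> e b"

definition qq :: "real \<Rightarrow> ('n \<Rightarrow> real ^ 'd) \<Rightarrow> real ^ 'n \<Rightarrow> real" where
  "qq lam e d = (\<Sum>a\<in>UNIV. \<Sum>b\<in>UNIV. d $ a * Mm lam e a b * d $ b)"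

definition gg :: "nat \<Rightarrow> real \<Rightarrow> real \<Rightarrow> real ^ 'n \<Rightarrow> ('n \<Rightarrow> real ^ 'd) \<Rightarrow> real ^ 'n \<Rightarrow> 'n \<Rightarrow> real" where
  "gg k lam \<theta> c e x a = \<theta> * (real k - 1) * c $ a + (1 - \<theta>) * (\<Sum>b\<in>UNIV. (Mm lam e a b + Mm lam e b a) * x $ b)"

lemma obj_alt: "obj k lam \<theta> c e x = \<theta> * (real k - 1) * (c \<bullet> x) + (1 - \<theta>) * qq lam e x"
  by (simp add: obj_def qq_def Mm_def)

lemma cross:
  fixes M :: "'n::finite \<Rightarrow> 'n \<Rightarrow> real"
  shows "(\<Sum>a\<in>UNIV. \<Sum>b\<in>UNIV. x $ a * M a b * d $ b + d $ a * M a b * x $ b)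
       = (\<Sum>a\<in>UNIV. (\<Sum>b\<in>UNIV. (M a b + M b a) * x $ b) * d $ a)"
proof -
  have "(\<Sum>a\<in>UNIV. \<Sum>b\<in>UNIV. x $ a * M a b * d $ b) = (\<Sum>b\<in>UNIV. \<Sum>a\<in>UNIV. x $ a * M a b * d $ b)"
    by (rule sum.swap)
  then have 1: "(\<Sum>a\<in>UNIV. \<Sum>b\<in>UNIV. x $ a * M a b * d $ b) = (\<Sum>a\<in>UNIV. \<Sum>b\<in>UNIV. x $ b * M b a * d $ a)" .
  show ?thesis
    unfolding sum.distrib 1 by (simp add: sum.distrib sum_distrib_right sum_distrib_left algebra_simps)
qed

lemma qq_add: "qq lam e (x + d) = qq lam e x + (\<Sum>a\<in>UNIV. (\<Sum>b\<in>UNIV. (Mm lam e a b + Mm lam e b a) * x $ b) * d $ a) + qq lam e d"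
proof -
  have "qq lam e (x + d) = (\<Sum>a\<in>UNIV. \<Sum>b\<in>UNIV. x $ a * Mm lam e a b * x $ b + (x $ a * Mm lam e a b * d $ b + d $ a * Mm lam e a b * x $ b) + d $ a * Mm lam e a b * d $ b)"
    unfolding qq_def by (simp add: algebra_simps)
  also have "\<dots> = qq lam e x + (\<Sum>a\<in>UNIV. \<Sum>b\<in>UNIV. x $ a * Mm lam e a b * d $ b + d $ a * Mm lam e a b * x $ b) + qq lam e d"
    unfolding qq_def by (simp add: sum.distrib)
  finally show ?thesis by (simp add: cross)
qed

lemma gg_sum: "(\<Sum>a\<in>UNIV. gg k lam \<theta> c e x a * d $ a) = \<theta> * (real k - 1) * (c \<bullet> d) + (1 - \<theta>) * (\<Sum>a\<in>UNIV. (\<Sum>b\<in>UNIV. (Mm lam e a b + Mm lam e b a) * x $ b) * d $ a)"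
proof -
  have "(\<Sum>a\<in>UNIV. gg k lam \<theta> c e x a * d $ a) = (\<Sum>a\<in>UNIV. \<theta> * (real k - 1) * (c $ a * d $ a) + (1 - \<theta>) * ((\<Sum>b\<in>UNIV. (Mm lam e a b + Mm lam e b a) * x $ b) * d $ a))"
    unfolding gg_def by (simp add: algebra_simps)
  also have "\<dots> = \<theta> * (real k - 1) * (\<Sum>a\<in>UNIV. c $ a * d $ a) + (1 - \<theta>) * (\<Sum>a\<in>UNIV. (\<Sum>b\<in>UNIV. (Mm lam e a b + Mm lam e b a) * x $ b) * d $ a)"
    by (simp add: sum.distrib sum_distrib_left)
  finally show ?thesis by (simp add: inner_vec_def)
qed

lemma obj_add: "obj k lam \<theta> c e (x + d) = obj k lam \<theta> c e x + (\<Sum>a\<in>UNIV. gg k lam \<theta> c e x a * d $ a) + (1 - \<theta>) * qq lam e d"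
  unfolding obj_alt qq_add gg_sum
  by (simp add: inner_add_right algebra_simps)

lemma qq_deriv: "(qq lam e has_derivative (\<lambda>d. \<Sum>a\<in>UNIV. (\<Sum>b\<in>UNIV. (Mm lam e a b + Mm lam e b a) * x $ b) * d $ a)) (at x)"
  unfolding qq_def[abs_def]
  apply (rule derivative_eq_intros bounded_linear.has_derivative[OF bounded_linear_vec_nth] refl)+
  apply (rule ext)
  apply (simp only: cross[symmetric])
  done

lemma obj_deriv: "(obj k lam \<theta> c e has_derivative (\<lambda>d. \<Sum>a\<in>UNIV. gg k lam \<theta> c e x a * d $ a)) (at x)"
  unfolding obj_alt[abs_def] gg_sum
  by (rule derivative_eq_intros qq_deriv refl | simp)+

lemma partial_eq: "partial (obj k lam \<theta> c e) x i = gg k lam \<theta> c e x i"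
  unfolding partial_def frechet_derivative_at[OF obj_deriv, symmetric]
  by (simp add: axis_def if_distrib cong: if_cong)


lemma dir_nth: "(\<delta> *\<^sub>R (axis p 1 - axis q 1) :: real ^ 'n) $ a = \<delta> * ((if a = p then 1 else 0) - (if a = q then 1 else 0))"
  by (simp add: axis_def)

lemma sum_dir: "(\<Sum>a\<in>UNIV. h a * (\<delta> *\<^sub>R (axis p 1 - axis q 1) :: real ^ 'n) $ a) = \<delta> * (h p - h q)"
proof -
  have "(\<Sum>a\<in>UNIV. h a * (\<delta> *\<^sub>R (axis p 1 - axis q 1) :: real ^ 'n) $ a)
      = (\<Sum>a\<in>UNIV. \<delta> * (if a = p then h a else 0) - \<delta> * (if a = q then h a else 0))"
    by (rule sum.cong) (auto simp: axis_def)
  also have "\<dots> = \<delta> * (h p - h q)"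
    by (simp add: sum_subtractf sum_distrib_left[symmetric] right_diff_distrib)
  finally show ?thesis .
qed

lemma qq_scale: "qq lam e (t *\<^sub>R v) = t^2 * qq lam e v"
  unfolding qq_def by (simp add: sum_distrib_left power2_eq_square algebra_simps)

lemma qq_dir:
  fixes e :: "'n::finite \<Rightarrow> real ^ 'd"
  assumes "p \<noteq> q" "\<And>i. norm (e i) = 1"
  shows "qq lam e (axis p 1 - axis q 1 :: real ^ 'n) = 2 * (lam - 1 + e p \<bullet> e q)"
proof -
  define w where "w = (1 *\<^sub>R (axis p 1 - axis q 1) :: real ^ 'n)"
  have sd: "\<And>h. (\<Sum>a\<in>UNIV. h a * w $ a) = h p - h q"
    using sum_dir[of _ 1 p q] unfolding w_def by simp
  have inner: "(\<Sum>b\<in>UNIV. w $ a * Mm lam e a b * w $ b) = (Mm lam e a p - Mm lam e a q) * w $ a" for a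
    using sd[of "\<lambda>b. w $ a * Mm lam e a b"] by (simp add: algebra_simps)
  have "qq lam e (axis p 1 - axis q 1) = qq lam e w" unfolding w_def by simp
  also have "\<dots> = (\<Sum>a\<in>UNIV. (Mm lam e a p - Mm lam e a q) * w $ a)"
    unfolding qq_def inner ..
  also have "\<dots> = Mm lam e p p - Mm lam e p q - (Mm lam e q p - Mm lam e q q)"
    by (rule sd)
  also have "\<dots> = 2 * (lam - 1 + e p \<bullet> e q)"
    using assms by (simp add: Mm_def inner_commute dot_square_norm)
  finally show ?thesis .
qed

lemma deriv_quad: "deriv (\<lambda>t. A + t * B + C * t^2) = (\<lambda>t::real. B + 2 * C * t)"
proof
  fix t :: real
  have "((\<lambda>t. A + t * B + C * t^2) has_real_derivative (B + 2 * C * t)) (at t)"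
    by (auto intro!: derivative_eq_intros simp: algebra_simps)
  then show "deriv (\<lambda>t. A + t * B + C * t^2) t = B + 2 * C * t" by (rule DERIV_imp_deriv)
qed

lemma deriv_lin: "deriv (\<lambda>t. B + 2 * C * t) (0::real) = 2 * C"
proof -
  have "((\<lambda>t. B + 2 * C * t) has_real_derivative (2 * C)) (at 0)"
    by (auto intro!: derivative_eq_intros)
  then show ?thesis by (rule DERIV_imp_deriv)
qed

lemma curv: "curvature (obj k lam \<theta> c e) x v = 2 * ((1 - \<theta>) * qq lam e v)"
proof -
  define B where "B = (\<Sum>a\<in>UNIV. gg k lam \<theta> c e x a * v $ a)"
  have eq: "(\<lambda>t. obj k lam \<theta> c e (x + t *\<^sub>R v)) = (\<lambda>t. obj k lam \<theta> c e x + t * B + ((1 - \<theta>) * qq lam e v) * t^2)"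
    by (rule ext) (simp add: obj_add qq_scale B_def sum_distrib_left algebra_simps)
  show ?thesis unfolding curvature_def eq deriv_quad deriv_lin by simp
qed

lemma frac_pair:
  assumes "x \<in> feasible k" "0 < x $ i" "x $ i < 1"
  shows "\<exists>j. j \<noteq> i \<and> 0 < x $ j \<and> x $ j < 1"
proof (rule ccontr)
  assume H: "\<not> (\<exists>j. j \<noteq> i \<and> 0 < x $ j \<and> x $ j < 1)"
  have "\<forall>j\<in>UNIV - {i}. x $ j \<in> \<int>"
  proof
    fix j assume "j \<in> UNIV - {i}"
    then have "j \<noteq> i" by auto
    with H have "\<not> (0 < x $ j \<and> x $ j < 1)" by auto
    moreover have "0 \<le> x $ j" "x $ j \<le> 1" using assms(1) unfolding feasible_def by auto
    ultimately have "x $ j = 0 \<or> x $ j = 1" by auto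
    then show "x $ j \<in> \<int>" by auto
  qed
  then have "(\<Sum>j\<in>UNIV - {i}. x $ j) \<in> \<int>" by (intro Ints_sum) auto
  moreover have "(\<Sum>j\<in>UNIV. x $ j) = x $ i + (\<Sum>j\<in>UNIV - {i}. x $ j)"
    by (simp add: sum.remove)
  moreover have "(\<Sum>j\<in>UNIV. x $ j) = real k" using assms(1) unfolding feasible_def by auto
  ultimately have "x $ i = real k - (\<Sum>j\<in>UNIV - {i}. x $ j)" "(\<Sum>j\<in>UNIV - {i}. x $ j) \<in> \<int>" by auto
  then have "x $ i \<in> \<int>" by (metis Ints_diff Ints_of_nat)
  then obtain m where "x $ i = of_int m" by (auto elim: Ints_cases)
  with assms(2,3) show False by simp
qed

lemma threshold:
  fixes A B :: "real set"
  assumes "finite A" "finite B" "\<forall>a\<in>A. \<forall>b\<in>B. a < b"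
  shows "\<exists>t \<gamma>. \<gamma> > 0 \<and> (\<forall>a\<in>A. a \<le> t - \<gamma>) \<and> (\<forall>b\<in>B. t + \<gamma> \<le> b)"
proof (cases "A = {}")
  case True
  show ?thesis
  proof (cases "B = {}")
    case True
    with \<open>A = {}\<close> show ?thesis by (intro exI[of _ 0] exI[of _ 1]) auto
  next
    case False
    then show ?thesis using \<open>A = {}\<close> assms(2)
      by (intro exI[of _ "Min B - 1"] exI[of _ 1]) auto
  qed
next
  case False
  show ?thesis
  proof (cases "B = {}")
    case True
    then show ?thesis using \<open>A \<noteq> {}\<close> assms(1)
      by (intro exI[of _ "Max A + 1"] exI[of _ 1]) auto
  next
    case False
    have "Max A < Min B" using False \<open>A \<noteq> {}\<close> assms by auto
    moreover have "\<forall>a\<in>A. a \<le> Max A" "\<forall>b\<in>B. Min B \<le> b" using assms(1,2) by auto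
    moreover have "(Max A + Min B) / 2 - (Min B - Max A) / 2 = Max A" "(Max A + Min B) / 2 + (Min B - Max A) / 2 = Min B"
      by (simp_all add: field_simps)
    ultimately have "(Min B - Max A) / 2 > 0 \<and> (\<forall>a\<in>A. a \<le> (Max A + Min B) / 2 - (Min B - Max A) / 2)
       \<and> (\<forall>b\<in>B. (Max A + Min B) / 2 + (Min B - Max A) / 2 \<le> b)" by auto
    then show ?thesis by blast
  qed
qed


lemma feas_step:
  assumes "x \<in> feasible k" "p \<noteq> q" "0 \<le> \<delta>" "\<delta> \<le> 1 - x $ p" "\<delta> \<le> x $ q"
  shows "x + \<delta> *\<^sub>R (axis p 1 - axis q 1) \<in> feasible k"
proof -
  have b: "0 \<le> x $ a \<and> x $ a \<le> 1" for a using assms(1) unfolding feasible_def by auto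
  have s: "(\<Sum>i\<in>UNIV. x $ i) = real k" using assms(1) unfolding feasible_def by auto
  have "0 \<le> (x + \<delta> *\<^sub>R (axis p 1 - axis q 1)) $ a \<and> (x + \<delta> *\<^sub>R (axis p 1 - axis q 1)) $ a \<le> 1" for a
    unfolding vector_add_component dir_nth using b[of a] assms(2-5) by auto
  moreover have "(\<Sum>i\<in>UNIV. (x + \<delta> *\<^sub>R (axis p 1 - axis q 1)) $ i) = real k"
    using sum_dir[of "\<lambda>_. 1" \<delta> p q] s by (simp add: sum.distrib del: vector_add_component) (simp add: sum.distrib)
  ultimately show ?thesis unfolding feasible_def by blast
qed

lemma pos_curv:
  fixes e :: "'n \<Rightarrow> real ^ 'd"
  assumes "lam \<ge> 2" "\<And>i j. i \<noteq> j \<Longrightarrow> e i \<bullet> e j > -1" "p \<noteq> q"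
  shows "lam - 1 + e p \<bullet> e q > 0"
  using assms(1) assms(2)[OF assms(3)] by linarith

lemma improve:
  fixes e :: "'n::finite \<Rightarrow> real ^ 'd"
  assumes "p \<noteq> q" "\<delta> > 0" "gg k lam \<theta> c e x p \<ge> gg k lam \<theta> c e x q" "\<theta> < 1"
    "\<And>i. norm (e i) = 1" "\<And>i j. i \<noteq> j \<Longrightarrow> e i \<bullet> e j > -1" "lam \<ge> 2"
  shows "obj k lam \<theta> c e (x + \<delta> *\<^sub>R (axis p 1 - axis q 1)) > obj k lam \<theta> c e x"
proof -
  have "obj k lam \<theta> c e (x + \<delta> *\<^sub>R (axis p 1 - axis q 1)) = obj k lam \<theta> c e x
     + \<delta> * (gg k lam \<theta> c e x p - gg k lam \<theta> c e x q) + (1 - \<theta>) * (\<delta>^2 * (2 * (lam - 1 + e p \<bullet> e q)))"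
    unfolding obj_add sum_dir qq_scale qq_dir[OF assms(1,5)] ..
  moreover have "(1 - \<theta>) * (\<delta>^2 * (2 * (lam - 1 + e p \<bullet> e q))) > 0"
  proof -
    have "lam - 1 + e p \<bullet> e q > 0" using assms(6)[OF assms(1)] assms(7) by linarith
    then show ?thesis using assms(2,4) by (intro mult_pos_pos) auto
  qed
  moreover have "\<delta> * (gg k lam \<theta> c e x p - gg k lam \<theta> c e x q) \<ge> 0"
    using assms(2,3) by simp
  ultimately show ?thesis by linarith
qed


lemma dist_step:
  fixes x :: "real ^ 'a::finite"
  shows "\<delta> \<ge> 0 \<Longrightarrow> dist (x + \<delta> *\<^sub>R (axis p 1 - axis q 1)) x \<le> 2 * \<delta>"
proof -
  assume d: "\<delta> \<ge> 0"
  have "dist (x + \<delta> *\<^sub>R (axis p 1 - axis q 1)) x = \<delta> * norm (axis p 1 - axis q 1 :: real ^ 'a)"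
    using d by (simp add: dist_norm)
  also have "\<dots> \<le> \<delta> * (norm (axis p (1::real) :: real ^ 'a) + norm (axis q (1::real) :: real ^ 'a))"
    using d by (intro mult_left_mono norm_triangle_ineq4) auto
  finally show ?thesis by simp
qed

lemma part_B:
  fixes e :: "'n::finite \<Rightarrow> real ^ 'd"
  assumes "\<theta> < 1" "\<And>i. norm (e i) = 1" "\<And>i j. i \<noteq> j \<Longrightarrow> e i \<bullet> e j > -1" "lam \<ge> 2"
    and lm: "local_maximizer (obj k lam \<theta> c e) (feasible k) x"
  shows "x $ i = 0 \<or> x $ i = 1"
proof (rule ccontr)
  assume H: "\<not> (x $ i = 0 \<or> x $ i = 1)"
  from lm obtain \<epsilon> where xP: "x \<in> feasible k" and "\<epsilon> > 0"
    and loc: "\<And>y. y \<in> feasible k \<Longrightarrow> dist y x < \<epsilon> \<Longrightarrow> obj k lam \<theta> c e y \<le> obj k lam \<theta> c e x"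
    unfolding local_maximizer_def by blast
  have "0 \<le> x $ i" "x $ i \<le> 1" using xP unfolding feasible_def by auto
  with H have xi: "0 < x $ i" "x $ i < 1" by auto
  obtain j where j: "j \<noteq> i" "0 < x $ j" "x $ j < 1" using frac_pair[OF xP xi] by blast
  obtain p q where pq: "p \<noteq> q" "0 < x $ p" "x $ p < 1" "0 < x $ q" "x $ q < 1"
    "gg k lam \<theta> c e x p \<ge> gg k lam \<theta> c e x q"
  proof (cases "gg k lam \<theta> c e x i \<ge> gg k lam \<theta> c e x j")
    case True then show ?thesis using that[of i j] j xi by auto
  next
    case False then show ?thesis using that[of j i] j xi by auto
  qed
  define \<delta> where "\<delta> = min (min (1 - x $ p) (x $ q)) (\<epsilon> / 3)"
  have d: "\<delta> > 0" "\<delta> \<le> 1 - x $ p" "\<delta> \<le> x $ q"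
    using pq \<open>\<epsilon> > 0\<close> unfolding \<delta>_def by auto
  have "\<delta> \<le> \<epsilon> / 3" unfolding \<delta>_def by (rule min.cobounded2)
  have yP: "x + \<delta> *\<^sub>R (axis p 1 - axis q 1) \<in> feasible k"
    using feas_step[OF xP pq(1)] d by auto
  have "dist (x + \<delta> *\<^sub>R (axis p 1 - axis q 1)) x < \<epsilon>"
    using dist_step[of \<delta> x p q] d \<open>\<delta> \<le> \<epsilon> / 3\<close> \<open>\<epsilon> > 0\<close> by linarith
  with loc yP have "obj k lam \<theta> c e (x + \<delta> *\<^sub>R (axis p 1 - axis q 1)) \<le> obj k lam \<theta> c e x" by blast
  moreover have "obj k lam \<theta> c e (x + \<delta> *\<^sub>R (axis p 1 - axis q 1)) > obj k lam \<theta> c e x"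
    using improve[OF pq(1) d(1) pq(6) assms(1-4)] .
  ultimately show False by linarith
qed


lemma qq_le: "qq lam e d \<le> lam * (\<Sum>a\<in>UNIV. (d $ a)^2)"
proof -
  have "qq lam e d = (\<Sum>a\<in>UNIV. \<Sum>b\<in>UNIV. d $ a * (if a = b then lam else 0) * d $ b) - (\<Sum>a\<in>UNIV. \<Sum>b\<in>UNIV. d $ a * (e a \<bullet> e b) * d $ b)"
    unfolding qq_def Mm_def by (simp add: algebra_simps sum_subtractf)
  also have "(\<Sum>a\<in>UNIV. \<Sum>b\<in>UNIV. d $ a * (if a = b then lam else 0) * d $ b) = lam * (\<Sum>a\<in>UNIV. (d $ a)^2)"
  proof -
    have "(\<Sum>b\<in>UNIV. d $ a * (if a = b then lam else 0) * d $ b) = (\<Sum>b\<in>UNIV. if a = b then lam * (d $ a)^2 else 0)" for a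
      by (rule sum.cong) (auto simp: power2_eq_square)
    then show ?thesis by (simp add: sum_distrib_left)
  qed
  also have "(\<Sum>a\<in>UNIV. \<Sum>b\<in>UNIV. d $ a * (e a \<bullet> e b) * d $ b) = (\<Sum>a\<in>UNIV. d $ a *\<^sub>R e a) \<bullet> (\<Sum>b\<in>UNIV. d $ b *\<^sub>R e b)"
    unfolding inner_sum_left inner_sum_right inner_scaleR_left inner_scaleR_right
    by (subst sum.swap) (simp add: algebra_simps sum_distrib_left)
  finally have eq: "qq lam e d = lam * (\<Sum>a\<in>UNIV. (d $ a)^2) - (\<Sum>a\<in>UNIV. d $ a *\<^sub>R e a) \<bullet> (\<Sum>b\<in>UNIV. d $ b *\<^sub>R e b)" .
  show ?thesis unfolding eq using inner_ge_zero[of "\<Sum>a\<in>UNIV. d $ a *\<^sub>R e a"] by linarith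
qed

definition saddle where
  "saddle k lam \<theta> c e x \<longleftrightarrow> (\<exists>i j \<delta>. i \<noteq> j \<and> \<delta> > 0 \<and>
               x + \<delta> *\<^sub>R (axis i 1 - axis j 1) \<in> feasible k \<and>
               partial (obj k lam \<theta> c e) x i = partial (obj k lam \<theta> c e) x j \<and>
               curvature (obj k lam \<theta> c e) x (axis i 1 - axis j 1)
                 = 4 * (1 - \<theta>) * (lam - 1 + e i \<bullet> e j) \<and>
               4 * (1 - \<theta>) * (lam - 1 + e i \<bullet> e j) > 0 \<and>
               obj k lam \<theta> c e (x + \<delta> *\<^sub>R (axis i 1 - axis j 1)) > obj k lam \<theta> c e x)"

lemma saddle_of:
  fixes e :: "'n::finite \<Rightarrow> real ^ 'd"
  assumes "\<theta> < 1" "\<And>i. norm (e i) = 1" "\<And>i j. i \<noteq> j \<Longrightarrow> e i \<bullet> e j > -1" "lam \<ge> 2"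
    and "x \<in> feasible k" "p \<noteq> q" "\<delta> > 0" "\<delta> \<le> 1 - x $ p" "\<delta> \<le> x $ q"
    and "gg k lam \<theta> c e x p = gg k lam \<theta> c e x q"
  shows "saddle k lam \<theta> c e x"
  unfolding saddle_def
proof (intro exI conjI)
  show "p \<noteq> q" "\<delta> > 0" by fact+
  show "x + \<delta> *\<^sub>R (axis p 1 - axis q 1) \<in> feasible k"
    using feas_step[OF assms(5,6)] assms(7-9) by auto
  show "partial (obj k lam \<theta> c e) x p = partial (obj k lam \<theta> c e) x q"
    using assms(10) by (simp add: partial_eq)
  show "curvature (obj k lam \<theta> c e) x (axis p 1 - axis q 1) = 4 * (1 - \<theta>) * (lam - 1 + e p \<bullet> e q)"
    unfolding curv qq_dir[OF assms(6,2)] by (simp add: algebra_simps)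
  have "lam - 1 + e p \<bullet> e q > 0" using assms(3)[OF assms(6)] assms(4) by linarith
  then show "4 * (1 - \<theta>) * (lam - 1 + e p \<bullet> e q) > 0" using assms(1) by simp
  show "obj k lam \<theta> c e (x + \<delta> *\<^sub>R (axis p 1 - axis q 1)) > obj k lam \<theta> c e x"
    using improve[OF assms(6,7) _ assms(1-4)] assms(10) by simp
qed


lemma integral_locmax:
  fixes e :: "'n::finite \<Rightarrow> real ^ 'd"
  assumes "0 \<le> \<theta>" "\<theta> < 1" "lam \<ge> 2" and xP: "x \<in> feasible k"
    and int: "\<And>a. x $ a = 0 \<or> x $ a = 1"
    and strict: "\<And>i j. x $ i = 0 \<Longrightarrow> x $ j = 1 \<Longrightarrow> gg k lam \<theta> c e x i < gg k lam \<theta> c e x j"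
  shows "local_maximizer (obj k lam \<theta> c e) (feasible k) x"
proof -
  let ?g = "gg k lam \<theta> c e x"
  obtain t \<gamma> where tg: "\<gamma> > 0" "\<forall>a\<in>?g ` {a. x $ a = 0}. a \<le> t - \<gamma>" "\<forall>b\<in>?g ` {a. x $ a = 1}. t + \<gamma> \<le> b"
    using threshold[of "?g ` {a. x $ a = 0}" "?g ` {a. x $ a = 1}"] strict by auto
  define \<epsilon> where "\<epsilon> = \<gamma> / lam"
  have "\<epsilon> > 0" unfolding \<epsilon>_def using tg(1) assms(3) by simp
  have lameps: "lam * \<epsilon> = \<gamma>" unfolding \<epsilon>_def using assms(3) by simp
  have sx: "(\<Sum>i\<in>UNIV. x $ i) = real k" using xP unfolding feasible_def by auto
  have "obj k lam \<theta> c e y \<le> obj k lam \<theta> c e x" if yP: "y \<in> feasible k" and dy: "dist y x < \<epsilon>" for y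
  proof -
    define d where "d = y - x"
    have yx: "y = x + d" unfolding d_def by simp
    have sy: "(\<Sum>i\<in>UNIV. y $ i) = real k" using yP unfolding feasible_def by auto
    have yb: "0 \<le> y $ a" "y $ a \<le> 1" for a using yP unfolding feasible_def by auto
    have sd: "(\<Sum>a\<in>UNIV. d $ a) = 0" unfolding d_def using sx sy by (simp add: sum_subtractf)
    have da: "\<bar>d $ a\<bar> < \<epsilon>" for a
      using dist_vec_nth_le[of y a x] dy unfolding d_def by (simp add: dist_real_def)
    let ?S = "\<Sum>a\<in>UNIV. \<bar>d $ a\<bar>"
    have S0: "?S \<ge> 0" by (simp add: sum_nonneg)
    have "(\<Sum>a\<in>UNIV. ?g a * d $ a) = (\<Sum>a\<in>UNIV. (?g a - t) * d $ a)"
      using sd by (simp add: left_diff_distrib sum_subtractf sum_distrib_left[symmetric])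
    also have "\<dots> \<le> (\<Sum>a\<in>UNIV. - \<gamma> * \<bar>d $ a\<bar>)"
    proof (rule sum_mono)
      fix a
      show "(?g a - t) * d $ a \<le> - \<gamma> * \<bar>d $ a\<bar>"
      proof (cases "x $ a = 0")
        case True
        then have "?g a - t \<le> - \<gamma>" using tg(2) by auto
        moreover have "d $ a \<ge> 0" "d $ a = \<bar>d $ a\<bar>" using True yb[of a] unfolding d_def by auto
        ultimately show ?thesis by (metis mult_right_mono)
      next
        case False
        then have x1: "x $ a = 1" using int by blast
        then have "?g a - t \<ge> \<gamma>" using tg(3) by auto
        moreover have "d $ a \<le> 0" "d $ a = - \<bar>d $ a\<bar>" using x1 yb[of a] unfolding d_def by auto
        ultimately have "(?g a - t) * d $ a \<le> \<gamma> * d $ a" by (metis mult_right_mono_neg)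
        then show ?thesis using \<open>d $ a = - \<bar>d $ a\<bar>\<close> by simp
      qed
    qed
    also have "\<dots> = - \<gamma> * ?S" by (simp add: sum_distrib_left)
    finally have lin: "(\<Sum>a\<in>UNIV. ?g a * d $ a) \<le> - \<gamma> * ?S" .
    have "qq lam e d \<le> lam * (\<Sum>a\<in>UNIV. (d $ a)^2)" by (rule qq_le)
    also have "\<dots> \<le> lam * (\<Sum>a\<in>UNIV. \<epsilon> * \<bar>d $ a\<bar>)"
    proof (intro mult_left_mono sum_mono)
      fix a
      have "(d $ a)^2 = \<bar>d $ a\<bar> * \<bar>d $ a\<bar>" by (simp add: power2_eq_square)
      also have "\<dots> \<le> \<epsilon> * \<bar>d $ a\<bar>" using da[of a] by (intro mult_right_mono) auto
      finally show "(d $ a)^2 \<le> \<epsilon> * \<bar>d $ a\<bar>" .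
    qed (use assms(3) in auto)
    also have "\<dots> = \<gamma> * ?S" using lameps by (simp add: sum_distrib_left[symmetric])
    finally have quad: "qq lam e d \<le> \<gamma> * ?S" .
    have "(1 - \<theta>) * qq lam e d \<le> (1 - \<theta>) * (\<gamma> * ?S)"
      using quad assms(2) by (intro mult_left_mono) auto
    also have "\<dots> \<le> \<gamma> * ?S" using assms(1) tg(1) S0
      by (simp add: algebra_simps)
    finally have "(1 - \<theta>) * qq lam e d \<le> \<gamma> * ?S" .
    then show ?thesis unfolding yx obj_add using lin by linarith
  qed
  then show ?thesis unfolding local_maximizer_def using xP \<open>\<epsilon> > 0\<close> by blast
qed


lemma part_A:
  fixes e :: "'n::finite \<Rightarrow> real ^ 'd"
  assumes "0 \<le> \<theta>" "\<theta> < 1" "\<And>i. norm (e i) = 1" "\<And>i j. i \<noteq> j \<Longrightarrow> e i \<bullet> e j > -1" "lam \<ge> 2"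
    and st: "stationary (obj k lam \<theta> c e) (feasible k) x"
  shows "local_maximizer (obj k lam \<theta> c e) (feasible k) x \<or> saddle k lam \<theta> c e x"
proof -
  let ?g = "gg k lam \<theta> c e x"
  from st obtain \<mu> where xP: "x \<in> feasible k" and
    mu: "\<And>i. (x $ i = 0 \<longrightarrow> ?g i \<le> \<mu>) \<and> (x $ i = 1 \<longrightarrow> ?g i \<ge> \<mu>) \<and> (0 < x $ i \<and> x $ i < 1 \<longrightarrow> ?g i = \<mu>)"
    unfolding stationary_def partial_eq by blast
  have xb: "0 \<le> x $ a" "x $ a \<le> 1" for a using xP unfolding feasible_def by auto
  show ?thesis
  proof (cases "\<exists>i. 0 < x $ i \<and> x $ i < 1")
    case True
    then obtain i where i: "0 < x $ i" "x $ i < 1" by blast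
    obtain j where j: "j \<noteq> i" "0 < x $ j" "x $ j < 1" using frac_pair[OF xP i] by blast
    have "?g i = ?g j" using mu[of i] mu[of j] i j by auto
    moreover have "min (1 - x $ i) (x $ j) > 0" using i j by auto
    ultimately have "saddle k lam \<theta> c e x"
      by (intro saddle_of[where \<delta>="min (1 - x $ i) (x $ j)", OF assms(2-5) xP j(1)[symmetric]]) auto
    then show ?thesis by blast
  next
    case False
    have int: "x $ a = 0 \<or> x $ a = 1" for a
    proof -
      have "\<not> (0 < x $ a \<and> x $ a < 1)" using False by blast
      then show ?thesis using xb[of a] by linarith
    qed
    show ?thesis
    proof (cases "\<exists>i j. x $ i = 0 \<and> x $ j = 1 \<and> ?g i = ?g j")
      case True
      then obtain i j where ij: "x $ i = 0" "x $ j = 1" "?g i = ?g j" by blast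
      then have "i \<noteq> j" by auto
      have "saddle k lam \<theta> c e x"
        by (rule saddle_of[where \<delta>=1, OF assms(2-5) xP \<open>i \<noteq> j\<close>]) (use ij in auto)
      then show ?thesis by blast
    next
      case False
      have "?g i < ?g j" if "x $ i = 0" "x $ j = 1" for i j
      proof -
        have "?g i \<le> \<mu>" "\<mu> \<le> ?g j" using mu[of i] mu[of j] that by auto
        moreover have "?g i \<noteq> ?g j" using False that by blast
        ultimately show ?thesis by linarith
      qed
      then have "local_maximizer (obj k lam \<theta> c e) (feasible k) x"
        by (intro integral_locmax[OF assms(1,2,5) xP int])
      then show ?thesis ..
    qed
  qed
qed

theorem theorem2:
  fixes k :: nat and c :: "real ^ 'n" and e :: "'n \<Rightarrow> real ^ 'd"
    and lam \<theta> :: real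
  assumes hk: "1 \<le> k" "k \<le> CARD('n)"
    and unit: "\<And>i. norm (e i) = 1"
    and angle: "\<And>i j. i \<noteq> j \<Longrightarrow> e i \<bullet> e j > -1"
    and hlam: "lam \<ge> 2"
    and htheta: "0 \<le> \<theta>" "\<theta> < 1"
  shows "(\<forall>x. stationary (obj k lam \<theta> c e) (feasible k) x \<longrightarrow>
            local_maximizer (obj k lam \<theta> c e) (feasible k) x \<or>
            (\<exists>i j \<delta>. i \<noteq> j \<and> \<delta> > 0 \<and>
               x + \<delta> *\<^sub>R (axis i 1 - axis j 1) \<in> feasible k \<and>
               partial (obj k lam \<theta> c e) x i = partial (obj k lam \<theta> c e) x j \<and>
               curvature (obj k lam \<theta> c e) x (axis i 1 - axis j 1)
                 = 4 * (1 - \<theta>) * (lam - 1 + e i \<bullet> e j) \<and>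
               4 * (1 - \<theta>) * (lam - 1 + e i \<bullet> e j) > 0 \<and>
               obj k lam \<theta> c e (x + \<delta> *\<^sub>R (axis i 1 - axis j 1)) > obj k lam \<theta> c e x))
         \<and> (\<forall>x. local_maximizer (obj k lam \<theta> c e) (feasible k) x \<longrightarrow>
            (\<forall>i. x $ i = 0 \<or> x $ i = 1))"
proof (intro conjI allI impI)
  fix x
  assume st: "stationary (obj k lam \<theta> c e) (feasible k) x"
  have "local_maximizer (obj k lam \<theta> c e) (feasible k) x \<or> saddle k lam \<theta> c e x"
    by (rule part_A[where e=e]) (use htheta unit angle hlam st in auto)
  then show "local_maximizer (obj k lam \<theta> c e) (feasible k) x \<or>
            (\<exists>i j \<delta>. i \<noteq> j \<and> \<delta> > 0 \<and>
               x + \<delta> *\<^sub>R (axis i 1 - axis j 1) \<in> feasible k \<and>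
               partial (obj k lam \<theta> c e) x i = partial (obj k lam \<theta> c e) x j \<and>
               curvature (obj k lam \<theta> c e) x (axis i 1 - axis j 1)
                 = 4 * (1 - \<theta>) * (lam - 1 + e i \<bullet> e j) \<and>
               4 * (1 - \<theta>) * (lam - 1 + e i \<bullet> e j) > 0 \<and>
               obj k lam \<theta> c e (x + \<delta> *\<^sub>R (axis i 1 - axis j 1)) > obj k lam \<theta> c e x)"
    unfolding saddle_def .
next
  fix x i
  assume lm: "local_maximizer (obj k lam \<theta> c e) (feasible k) x"
  show "x $ i = 0 \<or> x $ i = 1"
    by (rule part_B[where e=e]) (use htheta unit angle hlam lm in auto)
qed

end
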